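(* Let $n\ge 1$, $m\ge 2$, $N=\{1,\dots,n\}$, $M=\{1,\dots,m\}$, $R\in\mathbb{R}$, $b\in\mathbb{R}^n$, and bounds $l,u\in\mathbb{R}^{n\times m}$ with $l_{i,1}\le u_{i,1}<l_{i,2}\le u_{i,2}<\dots<l_{i,m}\le u_{i,m}$ for every $i\in N$. Let $K=(K_1,\dots,K_{m-1})\in\mathbb{Z}^{m-1}$ with $0\le K_1\le\dots\le K_{m-1}<n$, and let $K^+=(K_1,\dots,K_{m-2},K_{m-1}+1)$. For such a partition vector $K$ (with the conventions $K_0=0$, $K_m=n$) let $j^K(i)$ be the unique $j\in M$ with $K_{j-1}<i\le K_j$, and for $\lambda\in\mathbb{R}$ define \[ x_i(K,\lambda)=\begin{cases} l_{i,j^K(i)} & \text{if } \lambda\le l_{i,j^K(i)}+b_i,\\ \lambda-b_i & \text{if } l_{i,j^K(i)}+b_i\le\lambda\le u_{i,j^K(i)}+b_i,\\ u_{i,j^K(i)} & \text{if } \lambda\ge u_{i,j^K(i)}+b_i,\end{cases}\qquad z(K,\lambda)=\sum_{i\in N}x_i(K,\lambda). \] Suppose $\lambda^K,\lambda^{K^+}\in\mathbb{R}$ satisfy $z(K,\lambda^K)=R$ and $z(K^+,\lambda^{K^+})=R$. Then $\lambda^{K^+}>\lambda^K$.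
   Context: $x(K,\lambda)$ is the optimal solution of the Lagrangian relaxation of the quadratic problem $Q(K)$: $\min\sum_i\frac12(x_i+b_i)^2$ s.t. $\sum_i x_i=R$, $x_i\in[l_{i,j^K(i)},u_{i,j^K(i)}]$; a value $\lambda^K$ with $z(K,\lambda^K)=R$ is an optimal Lagrange multiplier of $Q(K)$, which exists when $Q(K)$ is feasible. *)

theory Defs
  imports Complex_Main
begin

text \<open>Partition vector K = (K_1,...,K_{m-1}) stored as a function on indices 1..m-1,
extended with the conventions K_0 = 0 and K_m = n.\<close>
definition Kext :: "nat \<Rightarrow> nat \<Rightarrow> (nat \<Rightarrow> nat) \<Rightarrow> nat \<Rightarrow> nat" where
  "Kext n m K j = (if j = 0 then 0 else if j = m then n else K j)"

definition jK :: "nat \<Rightarrow> nat \<Rightarrow> (nat \<Rightarrow> nat) \<Rightarrow> nat \<Rightarrow> nat" where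
  "jK n m K i = (THE j. j \<in> {1..m} \<and> Kext n m K (j - 1) < i \<and> i \<le> Kext n m K j)"

definition xK :: "(nat \<Rightarrow> nat \<Rightarrow> real) \<Rightarrow> (nat \<Rightarrow> nat \<Rightarrow> real) \<Rightarrow> (nat \<Rightarrow> real)
    \<Rightarrow> nat \<Rightarrow> nat \<Rightarrow> (nat \<Rightarrow> nat) \<Rightarrow> real \<Rightarrow> nat \<Rightarrow> real" where
  "xK l u b n m K lam i =
     (let j = jK n m K i in
      if lam \<le> l i j + b i then l i j
      else if lam \<le> u i j + b i then lam - b i
      else u i j)"

definition zK :: "(nat \<Rightarrow> nat \<Rightarrow> real) \<Rightarrow> (nat \<Rightarrow> nat \<Rightarrow> real) \<Rightarrow> (nat \<Rightarrow> real)
    \<Rightarrow> nat \<Rightarrow> nat \<Rightarrow> (nat \<Rightarrow> nat) \<Rightarrow> real \<Rightarrow> real" where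
  "zK l u b n m K lam = (\<Sum>i\<in>{1..n}. xK l u b n m K lam i)"

definition Kplus :: "nat \<Rightarrow> (nat \<Rightarrow> nat) \<Rightarrow> nat \<Rightarrow> nat" where
  "Kplus m K = K(m - 1 := K (m - 1) + 1)"

end

theory Submission
  imports Defs
begin

lemma Kmono_aux:
  fixes K :: "nat \<Rightarrow> nat" and a c m :: nat
  assumes "\<forall>j\<in>{1..<m - 1}. K j \<le> K (j + 1)" "1 \<le> a" "a \<le> c" "c \<le> m - 1"
  shows "K a \<le> (K c :: nat)"
  using assms(3,4)
proof (induction c rule: dec_induct)
  case base then show ?case by simp
next
  case (step c)
  then have "K c \<le> K (c+1)" using assms(1,2) by auto
  with step show ?case by simp
qed

lemma Kext_mono:
  assumes "\<forall>j\<in>{1..<m - 1}. K j \<le> K (j + 1)" "K (m - 1) \<le> n" "m \<ge> 2"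
    "a \<le> c" "c \<le> m"
  shows "Kext n m K a \<le> Kext n m K c"
proof -
  consider "a = 0" | "c = m" "a \<noteq> 0" | "a \<noteq> 0" "c \<noteq> m" by blast
  then show ?thesis
  proof cases
    case 1 then show ?thesis by (simp add: Kext_def)
  next
    case 2
    show ?thesis
    proof (cases "a = m")
      case True then show ?thesis using 2 by simp
    next
      case False
      then have "K a \<le> K (m - 1)" using Kmono_aux[OF assms(1)] 2 assms by auto
      then show ?thesis using 2 False assms(2,3) by (simp add: Kext_def)
    qed
  next
    case 3
    then have "K a \<le> K c" using Kmono_aux[OF assms(1)] assms by auto
    then show ?thesis using 3 assms by (simp add: Kext_def)
  qed
qed

lemma ex1_part:
  fixes F :: "nat \<Rightarrow> nat"
  assumes mono: "\<And>a c. a \<le> c \<Longrightarrow> c \<le> m \<Longrightarrow> F a \<le> F c"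
    and "F 0 = 0" "F m = n" "1 \<le> i" "i \<le> n"
  shows "\<exists>!j. j \<in> {1..m} \<and> F (j - 1) < i \<and> i \<le> F j"
proof -
  define j where "j = (LEAST j. i \<le> F j)"
  have ij: "i \<le> F j" unfolding j_def by (rule LeastI[of _ m]) (use assms in auto)
  have jm: "j \<le> m" unfolding j_def by (rule Least_le) (use assms in auto)
  have j1: "j \<ge> 1" using ij assms by (cases j) auto
  have jl: "F (j - 1) < i"
  proof (rule ccontr)
    assume "\<not> F (j - 1) < i"
    then have "j \<le> j - 1" unfolding j_def by (intro Least_le) simp
    with j1 show False by simp
  qed
  show ?thesis
  proof (rule ex1I[of _ j])
    show "j \<in> {1..m} \<and> F (j - 1) < i \<and> i \<le> F j" using ij jm j1 jl by auto
  next
    fix j' assume h: "j' \<in> {1..m} \<and> F (j' - 1) < i \<and> i \<le> F j'"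
    show "j' = j"
    proof (rule ccontr)
      assume "j' \<noteq> j"
      then consider "j' < j" | "j < j'" by linarith
      then show False
      proof cases
        case 1
        then have "F j' \<le> F (j - 1)" using mono jm by auto
        then show False using h jl by linarith
      next
        case 2
        then have "F j \<le> F (j' - 1)" using mono h by auto
        then show False using h ij by linarith
      qed
    qed
  qed
qed

lemma clamp_mono:
  fixes L U B x y :: real
  assumes "L \<le> U" "x \<le> y"
  shows "(if x \<le> L + B then L else if x \<le> U + B then x - B else U)
       \<le> (if y \<le> L + B then L else if y \<le> U + B then y - B else U)"
  using assms by auto

lemma clamp_bounds:
  fixes L U B x :: real
  assumes "L \<le> U"
  shows "L \<le> (if x \<le> L + B then L else if x \<le> U + B then x - B else U)"
    "(if x \<le> L + B then L else if x \<le> U + B then x - B else U) \<le> U"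
  using assms by auto

theorem lemma4:
  fixes n m :: nat and R :: real and b :: "nat \<Rightarrow> real"
    and l u :: "nat \<Rightarrow> nat \<Rightarrow> real" and K :: "nat \<Rightarrow> nat"
    and lamK lamKp :: real
  assumes "n \<ge> 1" and "m \<ge> 2"
    and "\<forall>i\<in>{1..n}. \<forall>j\<in>{1..m}. l i j \<le> u i j"
    and "\<forall>i\<in>{1..n}. \<forall>j\<in>{1..<m}. u i j < l i (j + 1)"
    and "\<forall>j\<in>{1..<m - 1}. K j \<le> K (j + 1)"
    and "K (m - 1) < n"
    and "zK l u b n m K lamK = R"
    and "zK l u b n m (Kplus m K) lamKp = R"
  shows "lamKp > lamK"
proof (rule ccontr)
  assume "\<not> lamKp > lamK"
  then have le: "lamKp \<le> lamK" by simp
  define K' where "K' = Kplus m K"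
  define i0 where "i0 = K (m - 1) + 1"
  have K'v: "K' j = (if j = m - 1 then K (m - 1) + 1 else K j)" for j
    by (simp add: K'_def Kplus_def)
  have chain': "\<forall>j\<in>{1..<m - 1}. K' j \<le> K' (j + 1)"
    using assms(5) by (auto simp: K'v)
  have monoF: "\<And>a c. a \<le> c \<Longrightarrow> c \<le> m \<Longrightarrow> Kext n m K a \<le> Kext n m K c"
    by (rule Kext_mono) (use assms in auto)
  have monoG: "\<And>a c. a \<le> c \<Longrightarrow> c \<le> m \<Longrightarrow> Kext n m K' a \<le> Kext n m K' c"
    by (rule Kext_mono[OF chain']) (use assms in \<open>auto simp: K'v\<close>)
  have ex1F: "\<exists>!j. j \<in> {1..m} \<and> Kext n m K (j - 1) < i \<and> i \<le> Kext n m K j"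
    if "i \<in> {1..n}" for i
    by (rule ex1_part[OF monoF]) (use that assms in \<open>auto simp: Kext_def\<close>)
  have ex1G: "\<exists>!j. j \<in> {1..m} \<and> Kext n m K' (j - 1) < i \<and> i \<le> Kext n m K' j"
    if "i \<in> {1..n}" for i
    by (rule ex1_part[OF monoG]) (use that assms in \<open>auto simp: Kext_def\<close>)
  have jF: "jK n m K i \<in> {1..m}" if "i \<in> {1..n}" for i
    using theI'[OF ex1F[OF that]] unfolding jK_def by blast
  have i0n: "i0 \<in> {1..n}" using assms unfolding i0_def by auto
  have jF0: "jK n m K i0 = m"
    unfolding jK_def
  proof (rule the1_equality[OF ex1F[OF i0n]])
    show "m \<in> {1..m} \<and> Kext n m K (m - 1) < i0 \<and> i0 \<le> Kext n m K m"
      using assms i0n by (auto simp: Kext_def i0_def)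
  qed
  have jG0: "jK n m K' i0 = m - 1"
    unfolding jK_def
  proof (rule the1_equality[OF ex1G[OF i0n]])
    have "Kext n m K' (m - 1 - 1) \<le> Kext n m K' (m - 1)" using monoG by simp
    moreover have "Kext n m K' (m - 1 - 1) \<noteq> Kext n m K' (m - 1) \<or> True" by simp
    moreover have "Kext n m K' (m - 1 - 1) \<le> K (m - 1)"
    proof (cases "m - 1 - 1 = 0")
      case True then show ?thesis by (simp add: Kext_def)
    next
      case False
      then have "K (m - 1 - 1) \<le> K (m - 1)"
        using Kmono_aux[OF assms(5)] by auto
      moreover have "m - 1 - 1 \<noteq> m - 1" "m - 1 - 1 \<noteq> m" using False assms(2) by auto
      ultimately show ?thesis using False by (simp add: Kext_def K'v)
    qed
    ultimately show "m - 1 \<in> {1..m} \<and> Kext n m K' (m - 1 - 1) < i0 \<and> i0 \<le> Kext n m K' (m - 1)"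
      using assms(2) by (auto simp: Kext_def i0_def K'v)
  qed
  have jeq: "jK n m K' i = jK n m K i" if "i \<in> {1..n}" "i \<noteq> i0" for i
  proof -
    have "(j \<in> {1..m} \<and> Kext n m K' (j - 1) < i \<and> i \<le> Kext n m K' j) =
          (j \<in> {1..m} \<and> Kext n m K (j - 1) < i \<and> i \<le> Kext n m K j)" for j
    proof -
      have A: "(Kext n m K' k < i) = (Kext n m K k < i)" for k
        using that assms(2) by (auto simp: Kext_def K'v i0_def)
      have B: "(i \<le> Kext n m K' k) = (i \<le> Kext n m K k)" for k
        using that assms(2) by (auto simp: Kext_def K'v i0_def)
      show ?thesis using A B by simp
    qed
    then show ?thesis unfolding jK_def by simp
  qed
  let ?x = "\<lambda>KK lam i. xK l u b n m KK lam i"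
  have fin: "finite {1..n}" by simp
  have zF: "zK l u b n m K lamK = ?x K lamK i0 + (\<Sum>i\<in>{1..n} - {i0}. ?x K lamK i)"
    unfolding zK_def using sum.remove[OF fin i0n] by simp
  have zG: "zK l u b n m K' lamKp = ?x K' lamKp i0 + (\<Sum>i\<in>{1..n} - {i0}. ?x K' lamKp i)"
    unfolding zK_def using sum.remove[OF fin i0n] by simp
  have rest: "(\<Sum>i\<in>{1..n} - {i0}. ?x K' lamKp i) \<le> (\<Sum>i\<in>{1..n} - {i0}. ?x K lamK i)"
  proof (rule sum_mono)
    fix i assume i: "i \<in> {1..n} - {i0}"
    then have "l i (jK n m K i) \<le> u i (jK n m K i)" using jF assms(3) by auto
    then show "?x K' lamKp i \<le> ?x K lamK i"
      using jeq i clamp_mono[OF _ le] by (simp add: xK_def Let_def)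
  qed
  have m1: "m - 1 \<in> {1..<m}" using assms(2) by auto
  have lu1: "l i0 (m - 1) \<le> u i0 (m - 1)" using assms(3) i0n assms(2) by auto
  have lu2: "l i0 m \<le> u i0 m" using assms(3) i0n assms(2) by auto
  have "?x K' lamKp i0 \<le> u i0 (m - 1)"
    using jG0 lu1 by (auto simp add: xK_def Let_def)
  also have "\<dots> < l i0 (m - 1 + 1)" using assms(4) i0n m1 by blast
  also have "\<dots> = l i0 m" using assms(2) by simp
  also have "\<dots> \<le> ?x K lamK i0"
    using jF0 clamp_bounds(1)[OF lu2] by (simp add: xK_def Let_def)
  finally have "?x K' lamKp i0 < ?x K lamK i0" .
  then have "zK l u b n m K' lamKp < zK l u b n m K lamK" using zF zG rest by linarith
  then show False using assms(7,8) K'_def by simp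
qed

end
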